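(* Let $O_1(\mathbf v,d)=HC_F(\mathbf v,d)\setminus(\hat\ell_1\cup\hat\ell_2\cup\hat\ell_4)$. Then the closure of $\alpha(O_1(\mathbf v,d))$ in $\mathbb{C}P^2$ is contained in $V(\mathbf v,d)$, and $\alpha$ restricts to a rational map $\alpha:HC_F(\mathbf v,d)\dashrightarrow V(\mathbf v,d)$.
   Context: On $\mathbb{C}P^4$ use homogeneous coordinates $[w_0,w_1,w_2,w_3,x_1]$; let $Y$ be the surface $w_0w_3-w_1w_2=0$, $x_1^2+w_0w_3=0$. For parameters $[\mathbf v,d]=[v_{11},v_{12},v_{21},v_{22},d]\in\mathbb{C}P^4$ (complex, not all zero) set $a_1=v_{11}-v_{21}-d$, $a_2=-v_{11}-v_{21}+d$, $a_3=v_{11}+v_{21}+d$, $a_4=-v_{11}+v_{21}-d$, and let $HC_F(\mathbf v,d)$ be the set of points of $Y$ satisfying $2\big(v_{22}(w_3-w_0)-v_{12}(w_2-w_1)\big)x_1+a_1w_0w_1+a_2w_0w_2+a_3w_1w_3+a_4w_2w_3=0$. The lines $\hat\ell_1=\{[w_0,w_1,0,0,0]\}$, $\hat\ell_2=\{[w_0,0,w_2,0,0]\}$, $\hat\ell_4=\{[0,w_1,0,w_3,0]\}$ lie on $Y$. Define the rational map $\alpha:Y\dashrightarrow\mathbb{C}P^2$, $\alpha([w_0,w_1,w_2,w_3,x_1])=[w_3x_1,w_2x_1,w_2w_3]$ (defined where these three are not all zero). On $\mathbb{C}P^2$ with coordinates $[u_0,u_1,u_2]$ let $V(\mathbf v,d)$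 be the plane quartic curve $P=0$, where $P=a_4u_2^4+2(v_{22}u_0-v_{12}u_1)u_2^3-(a_3u_0^2+a_2u_1^2)u_2^2+2u_0u_1(v_{22}u_1-v_{12}u_0)u_2+a_1u_0^2u_1^2$. *)

theory Defs
  imports "HOL-Analysis.Analysis"
begin

type_synonym c5 = "complex \<times> complex \<times> complex \<times> complex \<times> complex"
type_synonym c3 = "complex \<times> complex \<times> complex"

text \<open>Points of CP^4 and CP^2 are complex lines through the origin, represented
  as the set of nonzero multiples of a nonzero representative.\<close>

definition proj4 :: "c5 \<Rightarrow> c5 set" where
  "proj4 w = (case w of (w0,w1,w2,w3,x1) \<Rightarrow>
     {(c*w0, c*w1, c*w2, c*w3, c*x1) | c. c \<noteq> 0})"

definition proj2 :: "c3 \<Rightarrow> c3 set" where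
  "proj2 u = (case u of (u0,u1,u2) \<Rightarrow> {(c*u0, c*u1, c*u2) | c. c \<noteq> 0})"

definition CP2 :: "c3 set set" where
  "CP2 = {proj2 u | u. u \<noteq> 0}"

definition CP2_topology :: "c3 set topology" where
  "CP2_topology = topology (\<lambda>U. U \<subseteq> CP2 \<and> open {u. u \<noteq> 0 \<and> proj2 u \<in> U})"

definition Y_eqs :: "c5 \<Rightarrow> bool" where
  "Y_eqs w = (case w of (w0,w1,w2,w3,x1) \<Rightarrow>
      w0*w3 - w1*w2 = 0 \<and> x1^2 + w0*w3 = 0)"

definition acoef :: "complex \<Rightarrow> complex \<Rightarrow> complex
   \<Rightarrow> complex \<times> complex \<times> complex \<times> complex" where
  "acoef v11 v21 d = (v11 - v21 - d, - v11 - v21 + d, v11 + v21 + d, - v11 + v21 - d)"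

definition HC_eq :: "complex \<Rightarrow> complex \<Rightarrow> complex \<Rightarrow> complex \<Rightarrow> complex \<Rightarrow> c5 \<Rightarrow> bool" where
  "HC_eq v11 v12 v21 v22 d w = (case w of (w0,w1,w2,w3,x1) \<Rightarrow>
     (case acoef v11 v21 d of (a1,a2,a3,a4) \<Rightarrow>
      2 * (v22*(w3 - w0) - v12*(w2 - w1)) * x1
        + a1*w0*w1 + a2*w0*w2 + a3*w1*w3 + a4*w2*w3 = 0))"

definition HC_F :: "complex \<Rightarrow> complex \<Rightarrow> complex \<Rightarrow> complex \<Rightarrow> complex \<Rightarrow> c5 set set" where
  "HC_F v11 v12 v21 v22 d =
     {proj4 w | w. w \<noteq> 0 \<and> Y_eqs w \<and> HC_eq v11 v12 v21 v22 d w}"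

definition line1 :: "c5 set set" where
  "line1 = {proj4 (w0,w1,0,0,0) | w0 w1. (w0,w1) \<noteq> (0,0)}"
definition line2 :: "c5 set set" where
  "line2 = {proj4 (w0,0,w2,0,0) | w0 w2. (w0,w2) \<noteq> (0,0)}"
definition line4 :: "c5 set set" where
  "line4 = {proj4 (0,w1,0,w3,0) | w1 w3. (w1,w3) \<noteq> (0,0)}"

definition O1 :: "complex \<Rightarrow> complex \<Rightarrow> complex \<Rightarrow> complex \<Rightarrow> complex \<Rightarrow> c5 set set" where
  "O1 v11 v12 v21 v22 d = HC_F v11 v12 v21 v22 d - (line1 \<union> line2 \<union> line4)"

definition alpha_rep :: "c5 \<Rightarrow> c3" where
  "alpha_rep w = (case w of (w0,w1,w2,w3,x1) \<Rightarrow> (w3*x1, w2*x1, w2*w3))"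

definition alpha_img :: "c5 set set \<Rightarrow> c3 set set" where
  "alpha_img S = {proj2 (alpha_rep w) | w. w \<noteq> 0 \<and> proj4 w \<in> S \<and> alpha_rep w \<noteq> 0}"

definition quarticP :: "complex \<Rightarrow> complex \<Rightarrow> complex \<Rightarrow> complex \<Rightarrow> complex \<Rightarrow> c3 \<Rightarrow> complex" where
  "quarticP v11 v12 v21 v22 d u = (case u of (u0,u1,u2) \<Rightarrow>
     (case acoef v11 v21 d of (a1,a2,a3,a4) \<Rightarrow>
       a4*u2^4 + 2*(v22*u0 - v12*u1)*u2^3 - (a3*u0^2 + a2*u1^2)*u2^2
       + 2*u0*u1*(v22*u1 - v12*u0)*u2 + a1*u0^2*u1^2))"

definition Vcurve :: "complex \<Rightarrow> complex \<Rightarrow> complex \<Rightarrow> complex \<Rightarrow> complex \<Rightarrow> c3 set set" where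
  "Vcurve v11 v12 v21 v22 d = {proj2 u | u. u \<noteq> 0 \<and> quarticP v11 v12 v21 v22 d u = 0}"

end

theory Submission
  imports Defs
begin

lemma istop_CP2: "istopology (\<lambda>U. U \<subseteq> CP2 \<and> open {u. u \<noteq> 0 \<and> proj2 u \<in> U})"
proof -
  have i: "{u. u \<noteq> 0 \<and> proj2 u \<in> S \<inter> T} = {u. u \<noteq> 0 \<and> proj2 u \<in> S} \<inter> {u. u \<noteq> 0 \<and> proj2 u \<in> T}"
    for S T :: "c3 set set" by auto
  have u: "{u. u \<noteq> 0 \<and> proj2 u \<in> \<Union>K} = \<Union>((\<lambda>S. {u. u \<noteq> 0 \<and> proj2 u \<in> S}) ` K)"
    for K :: "c3 set set set" by auto
  show ?thesis unfolding istopology_def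
  proof (rule conjI; intro allI impI)
    fix S T :: "c3 set set"
    assume "S \<subseteq> CP2 \<and> open {u. u \<noteq> 0 \<and> proj2 u \<in> S}" "T \<subseteq> CP2 \<and> open {u. u \<noteq> 0 \<and> proj2 u \<in> T}"
    then show "S \<inter> T \<subseteq> CP2 \<and> open {u. u \<noteq> 0 \<and> proj2 u \<in> S \<inter> T}"
      unfolding i by (auto intro: open_Int)
  next
    fix K :: "c3 set set set"
    assume a: "\<forall>S\<in>K. S \<subseteq> CP2 \<and> open {u. u \<noteq> 0 \<and> proj2 u \<in> S}"
    then have "open (\<Union>((\<lambda>S. {u. u \<noteq> 0 \<and> proj2 u \<in> S}) ` K))" by (intro open_UN) blast
    then show "\<Union>K \<subseteq> CP2 \<and> open {u. u \<noteq> 0 \<and> proj2 u \<in> \<Union>K}"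
      unfolding u using a by blast
  qed
qed

lemma openin_CP2: "openin CP2_topology U \<longleftrightarrow> U \<subseteq> CP2 \<and> open {u. u \<noteq> 0 \<and> proj2 u \<in> U}"
  unfolding CP2_topology_def using istop_CP2 by simp

lemma topspace_CP2: "topspace CP2_topology = CP2"
proof -
  have "{u. u \<noteq> 0 \<and> proj2 u \<in> CP2} = - {0::c3}" by (auto simp: CP2_def)
  then have "openin CP2_topology CP2" by (simp add: openin_CP2 open_Compl)
  then show ?thesis using openin_subset[of CP2_topology] openin_CP2
    by (metis openin_topspace subset_antisym topspace_def Sup_upper mem_Collect_eq)
qed

lemma proj2_self: "u \<in> proj2 u"
proof -
  obtain a b c where "u = (a,b,c)" by (cases u) auto
  then show ?thesis unfolding proj2_def by (auto intro!: exI[of _ 1])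
qed

lemma proj4_self: "w \<in> proj4 w"
proof -
  obtain a b c d e where "w = (a,b,c,d,e)" by (cases w) auto
  then show ?thesis unfolding proj4_def by (auto intro!: exI[of _ 1])
qed

lemma quartic_hom: "quarticP v11 v12 v21 v22 d (c*a, c*b, c*e) = c^4 * quarticP v11 v12 v21 v22 d (a,b,e)"
  unfolding quarticP_def acoef_def by (simp add: algebra_simps power2_eq_square power4_eq_xxxx power3_eq_cube)

lemma V_iff:
  assumes "u \<noteq> 0"
  shows "proj2 u \<in> Vcurve v11 v12 v21 v22 d \<longleftrightarrow> quarticP v11 v12 v21 v22 d u = 0"
proof
  assume "proj2 u \<in> Vcurve v11 v12 v21 v22 d"
  then obtain u' where e: "proj2 u = proj2 u'" and q: "quarticP v11 v12 v21 v22 d u' = 0"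
    unfolding Vcurve_def by auto
  obtain a b f where u': "u' = (a,b,f)" by (cases u') auto
  have "u \<in> proj2 u'" using e proj2_self by metis
  then obtain c where "u = (c*a, c*b, c*f)" unfolding u' proj2_def by auto
  then show "quarticP v11 v12 v21 v22 d u = 0" using q u' quartic_hom by simp
next
  assume "quarticP v11 v12 v21 v22 d u = 0"
  then show "proj2 u \<in> Vcurve v11 v12 v21 v22 d" using assms unfolding Vcurve_def by blast
qed

lemma V_closed: "closedin CP2_topology (Vcurve v11 v12 v21 v22 d)"
proof -
  have sub: "Vcurve v11 v12 v21 v22 d \<subseteq> CP2" unfolding Vcurve_def CP2_def by auto
  have "{u. u \<noteq> 0 \<and> proj2 u \<in> CP2 - Vcurve v11 v12 v21 v22 d}
      = - {0} \<inter> {u. quarticP v11 v12 v21 v22 d u \<noteq> 0}"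
    using V_iff unfolding CP2_def by auto
  moreover have "open {u. quarticP v11 v12 v21 v22 d u \<noteq> 0}"
    unfolding quarticP_def acoef_def case_prod_beta
    by (intro open_Collect_neq continuous_intros)
  ultimately have "openin CP2_topology (CP2 - Vcurve v11 v12 v21 v22 d)"
    by (simp add: openin_CP2 open_Int open_Compl)
  then show ?thesis using sub by (simp add: closedin_def topspace_CP2)
qed

lemma key_alg:
  fixes ya yb yc yd x :: complex
  assumes e1: "ya*yd - yb*yc = 0" and x2: "x^2 + ya*yd = 0"
   and H: "2 * (pp*(yd - ya) - qq*(yc - yb)) * x
        + cA*ya*yb + cB*ya*yc + cC*yb*yd + cD*yc*yd = 0"
  shows "cD*(yc*yd)^4 + 2*(pp*(yd*x) - qq*(yc*x))*(yc*yd)^3 - (cC*(yd*x)^2 + cB*(yc*x)^2)*(yc*yd)^2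
       + 2*(yd*x)*(yc*x)*(pp*(yc*x) - qq*(yd*x))*(yc*yd) + cA*(yd*x)^2*(yc*x)^2 = 0"
proof -
  have X: "x^2 = -(ya*yd)" using x2 by (simp add: eq_neg_iff_add_eq_0)
  have E: "yb*yc = ya*yd" using e1 by simp
  have "cD*(yc*yd)^4 + 2*(pp*(yd*x) - qq*(yc*x))*(yc*yd)^3 - (cC*(yd*x)^2 + cB*(yc*x)^2)*(yc*yd)^2
       + 2*(yd*x)*(yc*x)*(pp*(yc*x) - qq*(yd*x))*(yc*yd) + cA*(yd*x)^2*(yc*x)^2
     = yc^2*yd^2*(cD*yc^2*yd^2 + 2*x*yc*yd*(pp*yd - qq*yc) - x^2*(cC*yd^2+cB*yc^2) + 2*x*x^2*(pp*yc-qq*yd) + cA*(x^2)^2)"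
    by (simp add: power2_eq_square power3_eq_cube power4_eq_xxxx algebra_simps)
  also have "\<dots> = yc^2*yd^2*(cD*yc^2*yd^2 + 2*x*yc*yd*(pp*yd - qq*yc) + ya*yd*(cC*yd^2+cB*yc^2) - 2*x*ya*yd*(pp*yc-qq*yd) + cA*(ya*yd)^2)"
    unfolding X by (simp add: power2_eq_square algebra_simps)
  also have "\<dots> = yc^2*yd^2*(cD*yc^2*yd^2 + 2*x*yd*(pp*yc*yd - pp*ya*yc - qq*yc^2 + qq*(yb*yc)) + cA*ya*yd*(yb*yc) + cB*ya*yc^2*yd + cC*yd^2*(yb*yc))"
    unfolding E by (simp add: power2_eq_square algebra_simps)
  also have "\<dots> = yc^3*yd^3*(2 * (pp*(yd - ya) - qq*(yc - yb)) * x
        + cA*ya*yb + cB*ya*yc + cC*yb*yd + cD*yc*yd)"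
    by (simp add: power2_eq_square power3_eq_cube algebra_simps)
  also have "\<dots> = 0" using H by simp
  finally show ?thesis .
qed

lemma img_sub: "alpha_img (HC_F v11 v12 v21 v22 d) \<subseteq> Vcurve v11 v12 v21 v22 d"
proof
  fix p assume "p \<in> alpha_img (HC_F v11 v12 v21 v22 d)"
  then obtain w where w: "w \<noteq> 0" "proj4 w \<in> HC_F v11 v12 v21 v22 d" "alpha_rep w \<noteq> 0"
    and p: "p = proj2 (alpha_rep w)" unfolding alpha_img_def by auto
  then obtain w' where e: "proj4 w = proj4 w'" and Y: "Y_eqs w'" and H: "HC_eq v11 v12 v21 v22 d w'"
    unfolding HC_F_def by auto
  obtain a b f g h where w': "w' = (a,b,f,g,h)" by (cases w') auto
  have "w \<in> proj4 w'" using e proj4_self by metis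
  then obtain c where wc: "w = (c*a, c*b, c*f, c*g, c*h)" unfolding w' proj4_def by auto
  have Y': "a*g - b*f = 0 \<and> h^2 + a*g = 0" using Y unfolding w' Y_eqs_def by (simp only: prod.case)
  have H': "2 * (v22*(g - a) - v12*(f - b)) * h
        + (v11 - v21 - d)*a*b + (- v11 - v21 + d)*a*f + (v11 + v21 + d)*b*g + (- v11 + v21 - d)*f*g = 0"
    using H unfolding w' HC_eq_def acoef_def by (simp only: prod.case)
  have q: "quarticP v11 v12 v21 v22 d (g*h, f*h, f*g) = 0"
    unfolding quarticP_def acoef_def prod.case
    by (rule key_alg[OF conjunct1[OF Y'] conjunct2[OF Y'] H'])
  have ar: "alpha_rep w = (c^2*(g*h), c^2*(f*h), c^2*(f*g))"
    unfolding wc alpha_rep_def prod.case by (simp add: power2_eq_square mult.assoc mult.left_commute)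
  have "quarticP v11 v12 v21 v22 d (alpha_rep w) = 0"
    unfolding ar quartic_hom q by simp
  then show "p \<in> Vcurve v11 v12 v21 v22 d" using p w(3) V_iff by blast
qed

lemma alpha_mono: "S \<subseteq> T \<Longrightarrow> alpha_img S \<subseteq> alpha_img T"
  unfolding alpha_img_def by blast

theorem lemma6p2:
  fixes v11 v12 v21 v22 d :: complex
  assumes "(v11, v12, v21, v22, d) \<noteq> 0"
  shows "CP2_topology closure_of (alpha_img (O1 v11 v12 v21 v22 d)) \<subseteq> Vcurve v11 v12 v21 v22 d
       \<and> alpha_img (HC_F v11 v12 v21 v22 d) \<subseteq> Vcurve v11 v12 v21 v22 d"
proof
  show h: "alpha_img (HC_F v11 v12 v21 v22 d) \<subseteq> Vcurve v11 v12 v21 v22 d" by (rule img_sub)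
  have "O1 v11 v12 v21 v22 d \<subseteq> HC_F v11 v12 v21 v22 d" unfolding O1_def by (rule Diff_subset)
  then have "alpha_img (O1 v11 v12 v21 v22 d) \<subseteq> alpha_img (HC_F v11 v12 v21 v22 d)"
    by (rule alpha_mono)
  then have "alpha_img (O1 v11 v12 v21 v22 d) \<subseteq> Vcurve v11 v12 v21 v22 d"
    using h by (rule subset_trans)
  then show "CP2_topology closure_of (alpha_img (O1 v11 v12 v21 v22 d)) \<subseteq> Vcurve v11 v12 v21 v22 d"
    using V_closed by (rule closure_of_minimal)
qed

end
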